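(* Let $f(y\mid\vec x)$ be a conditional density of $Y\in\mathbb R$ given $\vec X=\vec x\in\mathcal X$, continuous as a function of $y$ for every $\vec x$, and suppose $\widehat f=f$. For $\vec x\in\mathcal X$, $t\ge0$ let $g_{\vec x}(t)=\int_{\{y:f(y\mid\vec x)\ge t\}}f(y\mid\vec x)\,dy$, and define the profile distance $d_g(\vec x_a,\vec x_b)=\left(\int_0^\infty (g_{\vec x_a}(t)-g_{\vec x_b}(t))^2\,dt\right)^{1/2}$. For $\vec x\in\mathcal X$ and $\alpha\in(0,1)$ let $t^*(\vec x,\alpha)$ be the cutoff of the oracle band for $f(\cdot\mid\vec x)$ with coverage $1-\alpha$, i.e. the value with $\{y: f(y\mid\vec x)\ge t^*(\vec x,\alpha)\}$ the smallest region with probability $1-\alpha$ (so $g_{\vec x}(t^*(\vec x,\alpha))=1-\alpha$). Let $\sim$ be the equivalence relation $\vec x_a\sim\vec x_b\iff d_g(\vec x_a,\vec x_b)=0$. Then: (i) if $\vec x_a\sim\vec x_b$, then $t^*(\vec x_a,\alpha)=t^*(\vec x_b,\alpha)$ for every $\alpha\in(0,1)$; (ii) if $\sim'$ is any equivalence relation on $\mathcal X$ such that $\vec x_a\sim'\vec x_b$ implies $t^*(\vec x_a,\alpha)=t^*(\vec x_b,\alpha)$ for every $\alpha\in(0,1)$, then $\vec x_a\sim'\vec x_b\Rightarrow\vec x_a\sim\vec x_b$. *)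

theory Defs
  imports "HOL-Analysis.Analysis"
begin

definition cond_density :: "'a set \<Rightarrow> ('a \<Rightarrow> real \<Rightarrow> real) \<Rightarrow> bool" where
  "cond_density X f \<longleftrightarrow> (\<forall>x\<in>X. (\<forall>y. 0 \<le> f x y) \<and> integrable lborel (f x)
      \<and> integral\<^sup>L lborel (f x) = 1)"

definition profile :: "('a \<Rightarrow> real \<Rightarrow> real) \<Rightarrow> 'a \<Rightarrow> real \<Rightarrow> real" where
  "profile f x t = (LINT y:{y. t \<le> f x y}|lborel. f x y)"

definition profile_dist_sq :: "('a \<Rightarrow> real \<Rightarrow> real) \<Rightarrow> 'a \<Rightarrow> 'a \<Rightarrow> ennreal" where
  "profile_dist_sq f a b =
     (\<integral>\<^sup>+ t. indicator {0..} t * ennreal ((profile f a t - profile f b t)\<^sup>2) \<partial>lborel)"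

definition profile_dist :: "('a \<Rightarrow> real \<Rightarrow> real) \<Rightarrow> 'a \<Rightarrow> 'a \<Rightarrow> ereal" where
  "profile_dist f a b =
     (if profile_dist_sq f a b = \<infinity> then \<infinity> else ereal (sqrt (enn2real (profile_dist_sq f a b))))"

text \<open>Oracle cutoff t*(x,\<alpha>): the largest level t \<ge> 0 whose upper level set
  {y. f(y|x) \<ge> t} still has probability at least 1-\<alpha>, i.e. the level giving the
  smallest region of coverage 1-\<alpha>.\<close>
definition oracle_cutoff :: "('a \<Rightarrow> real \<Rightarrow> real) \<Rightarrow> 'a \<Rightarrow> real \<Rightarrow> real" where
  "oracle_cutoff f x \<alpha> = Sup {t. 0 \<le> t \<and> 1 - \<alpha> \<le> profile f x t}"

end

theory Submission imports Defs begin

definition GG :: "(real \<Rightarrow> real) \<Rightarrow> real \<Rightarrow> real" where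
  "GG F t = integral\<^sup>L lborel (\<lambda>y. indicator {y. t \<le> F y} y * F y)"

lemma profile_GG: "profile f x t = GG (f x) t"
  by (simp add: profile_def GG_def set_lebesgue_integral_def)

locale dens1 =
  fixes F :: "real \<Rightarrow> real"
  assumes nn: "\<And>y. 0 \<le> F y" and int: "integrable lborel F" and one: "integral\<^sup>L lborel F = 1"
    and cont: "continuous_on UNIV F"
begin

lemma meas[measurable]: "F \<in> borel_measurable borel"
  using cont by (rule borel_measurable_continuous_onI)

lemma int_ind: "integrable lborel (\<lambda>y. indicator {y. t \<le> F y} y * F y)"
  using integrable_mult_indicator[of "{y. t \<le> F y}" lborel F] int by simp

lemma G0: "t \<le> 0 \<Longrightarrow> GG F t = 1"
proof -
  assume "t \<le> 0"
  then have "(\<lambda>y. indicator {y. t \<le> F y} y * F y) = F"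
    using nn by (intro ext) (auto simp: indicator_def intro: order_trans)
  then show ?thesis using one by (simp add: GG_def)
qed

lemma Gnn: "0 \<le> GG F t"
  unfolding GG_def by (rule Bochner_Integration.integral_nonneg) (simp add: nn)

lemma Gmono: "s \<le> t \<Longrightarrow> GG F t \<le> GG F s"
  unfolding GG_def
  by (rule integral_mono[OF int_ind int_ind]) (auto simp: indicator_def nn)

lemma Gle1: "0 \<le> t \<Longrightarrow> GG F t \<le> 1"
  using Gmono[of 0 t] G0[of 0] by simp

lemma Glim_top: "(\<lambda>n. GG F (real n)) \<longlonglongrightarrow> 0"
proof -
  have "(\<lambda>n. integral\<^sup>L lborel (\<lambda>y. indicator {y. real n \<le> F y} y * F y)) \<longlonglongrightarrow> integral\<^sup>L lborel (\<lambda>y. indicator {} y * F y)"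
  proof (rule integral_dominated_convergence)
    show "AE y in lborel. (\<lambda>n. indicator {y. real n \<le> F y} y * F y) \<longlonglongrightarrow> indicator {} y * F y"
    proof (rule AE_I2)
      fix y
      obtain N where N: "F y < real N" using reals_Archimedean2 by blast
      have "eventually (\<lambda>n. indicator {y. real n \<le> F y} y * F y = 0) sequentially"
        unfolding eventually_sequentially
        by (rule exI[of _ N]) (use N in \<open>auto simp: indicator_def\<close>)
      then show "(\<lambda>n. indicator {y. real n \<le> F y} y * F y) \<longlonglongrightarrow> indicator {} y * F y"
        by (simp add: tendsto_eventually)
    qed
    show "\<And>i. AE y in lborel. norm (indicator {y. real i \<le> F y} y * F y) \<le> F y"
      by (auto simp: indicator_def nn)
  qed (auto simp: int)
  then show ?thesis by (simp add: GG_def)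
qed

lemma Gleft: assumes "\<And>s. s < t \<Longrightarrow> c \<le> GG F s" shows "c \<le> GG F t"
proof -
  have "(\<lambda>n. integral\<^sup>L lborel (\<lambda>y. indicator {y. t - 1 / Suc n \<le> F y} y * F y)) \<longlonglongrightarrow> integral\<^sup>L lborel (\<lambda>y. indicator {y. t \<le> F y} y * F y)"
  proof (rule integral_dominated_convergence[where w=F])
    show "AE y in lborel. (\<lambda>n. indicator {y. t - 1 / Suc n \<le> F y} y * F y) \<longlonglongrightarrow> indicator {y. t \<le> F y} y * F y"
    proof (rule AE_I2)
      fix y
      show "(\<lambda>n. indicator {y. t - 1 / Suc n \<le> F y} y * F y) \<longlonglongrightarrow> indicator {y. t \<le> F y} y * F y"
      proof (cases "t \<le> F y")
        case True
        have "\<And>n. 0 \<le> 1 / real (Suc n)" by simp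
        then have "\<And>n. t - 1 / Suc n \<le> F y"
          using True by (metis diff_le_eq le_add_same_cancel1 order_trans)
        then show ?thesis using True by (simp add: indicator_def)
      next
        case False
        then obtain N where N: "1 / Suc N < t - F y"
          by (metis diff_gt_0_iff_gt not_le nat_approx_posE)
        have "eventually (\<lambda>n. indicator {y. t - 1 / Suc n \<le> F y} y * F y = 0) sequentially"
          unfolding eventually_sequentially
        proof (rule exI[of _ N], intro allI impI)
          fix n assume "N \<le> n"
          then have "1 / real (Suc n) \<le> 1 / Suc N"
            by (intro divide_left_mono) auto
          then show "indicator {y. t - 1 / Suc n \<le> F y} y * F y = 0"
            using N by (auto simp: indicator_def)
        qed
        then show ?thesis using False
          by (simp add: indicator_def tendsto_eventually)
      qed
    qed
    show "\<And>i. AE y in lborel. norm (indicator {y. t - 1 / Suc i \<le> F y} y * F y) \<le> F y"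
      by (auto simp: indicator_def nn)
  qed (auto simp: int)
  then have lim: "(\<lambda>n. GG F (t - 1 / Suc n)) \<longlonglongrightarrow> GG F t" by (simp add: GG_def)
  have "\<forall>n. c \<le> GG F (t - 1 / Suc n)"
    using assms by simp
  then show ?thesis
    by (intro LIMSEQ_le_const[OF lim]) blast
qed

lemma key:
  assumes c: "0 < c" "c < 1" and t: "0 \<le> t"
  shows "c \<le> GG F t \<longleftrightarrow> t \<le> Sup {t. 0 \<le> t \<and> c \<le> GG F t}"
proof -
  let ?S = "{t. 0 \<le> t \<and> c \<le> GG F t}"
  have "0 \<in> ?S" using G0[of 0] c by simp
  have "eventually (\<lambda>n. GG F (real n) < c) sequentially"
    using order_tendstoD(2)[OF Glim_top c(1)] .
  then obtain N0 where "\<forall>n\<ge>N0. GG F (real n) < c"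
    unfolding eventually_sequentially by blast
  then obtain N where N: "GG F (real N) < c" by blast
  have bdd: "bdd_above ?S"
  proof (rule bdd_aboveI[of _ "real N"])
    fix s assume "s \<in> ?S"
    then have "0 \<le> s" "c \<le> GG F s" by auto
    show "s \<le> real N"
    proof (rule ccontr)
      assume "\<not> s \<le> real N"
      then have "GG F s \<le> GG F (real N)" using Gmono[of "real N" s] by simp
      then show False using N \<open>c \<le> GG F s\<close> by simp
    qed
  qed
  show ?thesis
  proof
    assume "c \<le> GG F t" then show "t \<le> Sup ?S" using t bdd by (intro cSup_upper) auto
  next
    assume le: "t \<le> Sup ?S"
    have "c \<le> GG F s" if "s < Sup ?S" for s
    proof -
      have ne: "?S \<noteq> {}" using \<open>0 \<in> ?S\<close> by auto
      from less_cSupD[OF ne that] obtain u where "u \<in> ?S" "s < u" ..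
      then show ?thesis using Gmono[of s u] by auto
    qed
    then have "c \<le> GG F (Sup ?S)" by (rule Gleft)
    then show "c \<le> GG F t"
      using le Gmono[of t "Sup ?S"] by linarith
  qed
qed

end

lemma levels_eq:
  fixes u v :: real
  assumes "0 \<le> u" "u \<le> 1" "0 \<le> v" "v \<le> 1" "\<And>c. 0 < c \<Longrightarrow> c < 1 \<Longrightarrow> c \<le> u \<longleftrightarrow> c \<le> v"
  shows "u = v"
proof (rule ccontr)
  assume "u \<noteq> v"
  then consider "u < v" | "v < u" by linarith
  then show False
  proof cases
    case 1 then show False using assms(5)[of "(u+v)/2"] assms(1-4) by auto
  next
    case 2 then show False using assms(5)[of "(u+v)/2"] assms(1-4) by auto
  qed
qed

lemma dist_sq_sym: "profile_dist_sq f a b = profile_dist_sq f b a"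
  unfolding profile_dist_sq_def by (simp add: power2_commute)

lemma dist_zero: "profile_dist f a b = 0 \<Longrightarrow> profile_dist_sq f a b = 0"
  unfolding profile_dist_def
  by (cases "profile_dist_sq f a b = \<infinity>") (auto simp: enn2real_eq_0_iff)

context
  fixes X :: "'a set" and f :: "'a \<Rightarrow> real \<Rightarrow> real"
  assumes dens: "cond_density X f"
    and cont: "\<forall>x\<in>X. continuous_on UNIV (f x)"
begin

lemma D: "x \<in> X \<Longrightarrow> dens1 (f x)"
  using dens cont unfolding cond_density_def dens1_def by auto

lemma key':
  assumes "x \<in> X" "0 < c" "c < 1" "0 \<le> t"
  shows "c \<le> profile f x t \<longleftrightarrow> t \<le> oracle_cutoff f x (1 - c)"
  using dens1.key[OF D[OF assms(1)] assms(2-4)]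
  by (simp add: oracle_cutoff_def profile_GG)

lemma prof_bounds: "x \<in> X \<Longrightarrow> 0 \<le> t \<Longrightarrow> 0 \<le> profile f x t \<and> profile f x t \<le> 1"
  using dens1.Gnn[OF D] dens1.Gle1[OF D] by (simp add: profile_GG)

lemma prof_mono: "x \<in> X \<Longrightarrow> s \<le> t \<Longrightarrow> profile f x t \<le> profile f x s"
  using dens1.Gmono[OF D] by (simp add: profile_GG)

lemma cut_nonneg:
  assumes "x \<in> X" "0 < \<alpha>" "\<alpha> < 1"
  shows "0 \<le> oracle_cutoff f x \<alpha>"
  using key'[OF assms(1), of "1 - \<alpha>" 0] assms prof_bounds[OF assms(1), of 0]
    dens1.G0[OF D[OF assms(1)], of 0] by (simp add: profile_GG)

lemma half:
  assumes a: "a \<in> X" and b: "b \<in> X" and z: "profile_dist_sq f a b = 0"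
    and al: "0 < \<alpha>" "\<alpha> < 1"
  shows "oracle_cutoff f a \<alpha> \<le> oracle_cutoff f b \<alpha>"
proof (rule ccontr)
  let ?Ta = "oracle_cutoff f a \<alpha>" and ?Tb = "oracle_cutoff f b \<alpha>"
  define c where "c = 1 - \<alpha>"
  have c: "0 < c" "c < 1" using al by (auto simp: c_def)
  have al': "\<alpha> = 1 - c" by (simp add: c_def)
  assume "\<not> ?Ta \<le> ?Tb"
  then have lt: "?Tb < ?Ta" by simp
  define t0 where "t0 = (?Ta + ?Tb) / 2"
  have Tb0: "0 \<le> ?Tb" using cut_nonneg[OF b al] .
  have t0: "?Tb < t0" "t0 < ?Ta" "0 \<le> t0" using lt Tb0 by (auto simp: t0_def)
  have gb0: "profile f b t0 < c"
    using key'[OF b c t0(3)] t0(1) al' by auto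
  define \<delta> where "\<delta> = (c - profile f b t0)\<^sup>2"
  have \<delta>: "0 < \<delta>" using gb0 by (simp add: \<delta>_def)
  have ptw: "ennreal \<delta> * indicator {t0..?Ta} t
      \<le> indicator {0..} t * ennreal ((profile f a t - profile f b t)\<^sup>2)" for t
  proof (cases "t \<in> {t0..?Ta}")
    case True
    then have t: "0 \<le> t" "t0 \<le> t" "t \<le> ?Ta" using t0 by auto
    have ga: "c \<le> profile f a t" using key'[OF a c t(1)] t(3) al' by auto
    have gb: "profile f b t \<le> profile f b t0" using prof_mono[OF b t(2)] .
    have "\<delta> \<le> (profile f a t - profile f b t)\<^sup>2"
      unfolding \<delta>_def using ga gb gb0
      by (intro power_mono) auto
    then show ?thesis using True t by (auto intro: ennreal_leI)
  qed auto
  have "ennreal \<delta> * emeasure lborel {t0..?Ta} = (\<integral>\<^sup>+ t. ennreal \<delta> * indicator {t0..?Ta} t \<partial>lborel)"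
    by (simp add: nn_integral_cmult_indicator)
  also have "\<dots> \<le> profile_dist_sq f a b"
    unfolding profile_dist_sq_def by (rule nn_integral_mono) (rule ptw)
  also have "\<dots> = 0" by (rule z)
  finally have "ennreal \<delta> * emeasure lborel {t0..?Ta} \<le> 0" .
  moreover have "0 < ennreal \<delta> * emeasure lborel {t0..?Ta}"
  proof -
    have "emeasure lborel {t0..?Ta} = ennreal (?Ta - t0)" using t0 by simp
    moreover have "ennreal \<delta> * ennreal (?Ta - t0) = ennreal (\<delta> * (?Ta - t0))"
      using \<delta> t0 by (simp add: ennreal_mult)
    moreover have "0 < \<delta> * (?Ta - t0)" using \<delta> t0 by simp
    ultimately show ?thesis by simp
  qed
  ultimately show False by (meson leD)
qed

end

theorem theorem5:
  fixes X :: "'a set" and f :: "'a \<Rightarrow> real \<Rightarrow> real"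
  assumes dens: "cond_density X f"
    and cont: "\<forall>x\<in>X. continuous_on UNIV (f x)"
  shows "(\<forall>xa\<in>X. \<forall>xb\<in>X. profile_dist f xa xb = 0 \<longrightarrow>
            (\<forall>\<alpha>\<in>{0<..<1}. oracle_cutoff f xa \<alpha> = oracle_cutoff f xb \<alpha>))
       \<and> (\<forall>R. equiv X R \<and>
              (\<forall>(xa, xb)\<in>R. \<forall>\<alpha>\<in>{0<..<1}. oracle_cutoff f xa \<alpha> = oracle_cutoff f xb \<alpha>)
              \<longrightarrow> (\<forall>(xa, xb)\<in>R. profile_dist f xa xb = 0))"
proof (intro conjI ballI impI allI)
  fix xa xb and \<alpha> :: real assume xa: "xa \<in> X" and xb: "xb \<in> X" and d: "profile_dist f xa xb = 0"
    and al: "\<alpha> \<in> {0<..<1}"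
  have z: "profile_dist_sq f xa xb = 0" using dist_zero[OF d] .
  then have z': "profile_dist_sq f xb xa = 0" by (simp add: dist_sq_sym)
  show "oracle_cutoff f xa \<alpha> = oracle_cutoff f xb \<alpha>"
    using half[OF dens cont xa xb z] half[OF dens cont xb xa z'] al by force
next
  fix R p assume H: "equiv X R \<and>
              (\<forall>(xa, xb)\<in>R. \<forall>\<alpha>\<in>{0<..<1}. oracle_cutoff f xa \<alpha> = oracle_cutoff f xb \<alpha>)"
  assume p: "p \<in> R"
  {
    obtain a b where pab: "p = (a, b)" by (cases p)
    have ab: "(a, b) \<in> R" using p pab by simp
    have a: "a \<in> X" and b: "b \<in> X" using H ab unfolding equiv_def refl_on_def by auto
    have cut: "\<And>\<alpha>. \<alpha> \<in> {0<..<1} \<Longrightarrow> oracle_cutoff f a \<alpha> = oracle_cutoff f b \<alpha>"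
      using H ab by auto
    have eq: "profile f a t = profile f b t" if t: "0 \<le> t" for t
    proof (rule levels_eq)
      show "0 \<le> profile f a t" "profile f a t \<le> 1" using prof_bounds[OF dens cont a t] by auto
      show "0 \<le> profile f b t" "profile f b t \<le> 1" using prof_bounds[OF dens cont b t] by auto
      fix c :: real assume c: "0 < c" "c < 1"
      show "c \<le> profile f a t \<longleftrightarrow> c \<le> profile f b t"
        using key'[OF dens cont a c t] key'[OF dens cont b c t] cut[of "1 - c"] c by auto
    qed
    have "(\<lambda>t. indicator {0..} t * ennreal ((profile f a t - profile f b t)\<^sup>2)) = (\<lambda>t::real. 0::ennreal)"
      by (rule ext) (auto simp: indicator_def eq)
    then have "profile_dist_sq f a b = 0" unfolding profile_dist_sq_def by simp
    then show "case p of (xa, xb) \<Rightarrow> profile_dist f xa xb = 0"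
      using pab by (simp add: profile_dist_def)
  }
qed

end
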